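(* Let $t:\Sigma^*\to\Omega^*$ be a rational partial function with suffix-closed domain $X=\mathrm{dom}(t)$. There is a constant $c$ (depending only on $t$) such that for all $u,v,w\in\Sigma^*$ with $uw,vw\in X$ and $u\mathrel{\mathcal R_t}v$ we have $\|t(uw),t(vw)\|\le c\,(|u|+|v|)$, i.e. $\|t(uw),t(vw)\|\in O(|u|+|v|)$.
   Context: For words $x,y$, $x\wedge y$ is their longest common suffix and $\|x,y\|=|x|+|y|-2|x\wedge y|$. $u\mathrel{\mathcal R_t}v$ iff $\{z:uz\in X\}=\{z:vz\in X\}$ and the set $\{\|t(uw),t(vw)\|:uw,vw\in X\}$ is finite. *)

theory Defs
  imports Main
begin

text \<open>A (nondeterministic, finite) transducer with states of type nat is given by a
finite set of initial states I, final states F and a finite set of transitions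
(p, x, y, q), reading the input word x and writing the output word y.\<close>

inductive path :: "(nat \<times> 'a list \<times> 'b list \<times> nat) set \<Rightarrow> nat \<Rightarrow> 'a list \<Rightarrow> 'b list \<Rightarrow> nat \<Rightarrow> bool"
  for \<Delta> where
  path_nil: "path \<Delta> p [] [] p"
| path_snoc: "path \<Delta> p x y q \<Longrightarrow> (q, a, b, r) \<in> \<Delta> \<Longrightarrow> path \<Delta> p (x @ a) (y @ b) r"

definition rational_relation :: "('a list \<times> 'b list) set \<Rightarrow> bool" where
  "rational_relation R \<longleftrightarrow>
     (\<exists>(I::nat set) (F::nat set) (\<Delta>::(nat \<times> 'a list \<times> 'b list \<times> nat) set).
        finite I \<and> finite F \<and> finite \<Delta> \<and>
        R = {(x, y). \<exists>p\<in>I. \<exists>q\<in>F. path \<Delta> p x y q})"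

definition rational_function :: "('a list \<Rightarrow> 'b list option) \<Rightarrow> bool" where
  "rational_function t \<longleftrightarrow> rational_relation {(x, y). t x = Some y}"

definition suffix_closed :: "'a list set \<Rightarrow> bool" where
  "suffix_closed X \<longleftrightarrow> (\<forall>u w. u @ w \<in> X \<longrightarrow> w \<in> X)"

fun lcp :: "'a list \<Rightarrow> 'a list \<Rightarrow> 'a list" where
  "lcp (a # xs) (b # ys) = (if a = b then a # lcp xs ys else [])"
| "lcp _ _ = []"

definition lcsuf :: "'a list \<Rightarrow> 'a list \<Rightarrow> 'a list" where
  "lcsuf x y = rev (lcp (rev x) (rev y))"

definition wdist :: "'a list \<Rightarrow> 'a list \<Rightarrow> nat" where
  "wdist x y = length x + length y - 2 * length (lcsuf x y)"

definition R_rel :: "('a list \<Rightarrow> 'b list option) \<Rightarrow> 'a list \<Rightarrow> 'a list \<Rightarrow> bool" where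
  "R_rel t u v \<longleftrightarrow>
     {z. t (u @ z) \<noteq> None} = {z. t (v @ z) \<noteq> None} \<and>
     finite {wdist (the (t (u @ w))) (the (t (v @ w))) | w. t (u @ w) \<noteq> None \<and> t (v @ w) \<noteq> None}"

end

theory Submission
  imports Defs
begin

fun chain :: "(nat \<times> 'a list \<times> 'b list \<times> nat) set \<Rightarrow> nat \<Rightarrow> (nat \<times> 'a list \<times> 'b list \<times> nat) list \<Rightarrow> nat \<Rightarrow> bool" where
  "chain D p [] q = (p = q)"
| "chain D p ((a,x,y,b) # r) q = ((a,x,y,b) \<in> D \<and> a = p \<and> chain D b r q)"

fun inp :: "(nat \<times> 'a list \<times> 'b list \<times> nat) list \<Rightarrow> 'a list" where
  "inp [] = []"
| "inp ((a,x,y,b) # r) = x @ inp r"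

fun outp :: "(nat \<times> 'a list \<times> 'b list \<times> nat) list \<Rightarrow> 'b list" where
  "outp [] = []"
| "outp ((a,x,y,b) # r) = y @ outp r"

fun tgt :: "nat \<Rightarrow> (nat \<times> 'a list \<times> 'b list \<times> nat) list \<Rightarrow> nat" where
  "tgt p [] = p"
| "tgt p ((a,x,y,b) # r) = tgt b r"

lemma inp_append[simp]: "inp (r1 @ r2) = inp r1 @ inp r2"
  by (induction r1 rule: inp.induct) auto

lemma outp_append[simp]: "outp (r1 @ r2) = outp r1 @ outp r2"
  by (induction r1 rule: outp.induct) auto

lemma tgt_append[simp]: "tgt p (r1 @ r2) = tgt (tgt p r1) r2"
  by (induction p r1 rule: tgt.induct) auto

lemma chain_tgt: "chain D p r q \<Longrightarrow> tgt p r = q"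
  by (induction D p r q rule: chain.induct) auto

lemma chain_append: "chain D p (r1 @ r2) q \<longleftrightarrow> chain D p r1 (tgt p r1) \<and> chain D (tgt p r1) r2 q"
  by (induction D p r1 q rule: chain.induct) auto

lemma path_chain: "path D p x y q \<Longrightarrow> \<exists>r. chain D p r q \<and> inp r = x \<and> outp r = y"
proof (induction rule: path.induct)
  case (path_nil p)
  then show ?case by (intro exI[of _ "[]"]) auto
next
  case (path_snoc p x y q a b c)
  then obtain r where r: "chain D p r q" "inp r = x" "outp r = y" by blast
  have "chain D p (r @ [(q,a,b,c)]) c" using r path_snoc(2) chain_tgt[OF r(1)]
    by (simp add: chain_append)
  then show ?case using r by (intro exI[of _ "r @ [(q,a,b,c)]"]) auto
qed

lemma chain_path: "chain D p r q \<Longrightarrow> path D p (inp r) (outp r) q"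
proof (induction r arbitrary: q rule: rev_induct)
  case Nil
  then show ?case by (auto intro: path.intros)
next
  case (snoc d r)
  obtain a x y b where d: "d = (a,x,y,b)" by (cases d) auto
  from snoc.prems have c: "chain D p r (tgt p r)" "chain D (tgt p r) [d] q"
    by (auto simp: chain_append)
  then have "d \<in> D" "a = tgt p r" "b = q" using d by auto
  then show ?case using snoc.IH[OF c(1)] d path_snoc by fastforce
qed

lemma acc_iff:
  assumes gr: "{(x,y). t x = Some y} = {(x,y). \<exists>p\<in>I. \<exists>q\<in>F. path D p x y q}"
  shows "t z = Some y \<longleftrightarrow> (\<exists>p\<in>I. \<exists>r. chain D p r (tgt p r) \<and> tgt p r \<in> F \<and> inp r = z \<and> outp r = y)"
proof -
  have "t z = Some y \<longleftrightarrow> (\<exists>p\<in>I. \<exists>q\<in>F. path D p z y q)" using gr by blast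
  also have "\<dots> \<longleftrightarrow> (\<exists>p\<in>I. \<exists>r. chain D p r (tgt p r) \<and> tgt p r \<in> F \<and> inp r = z \<and> outp r = y)"
    by (metis chain_path chain_tgt path_chain)
  finally show ?thesis .
qed

lemma chain_in_Q: "chain D p r q \<Longrightarrow> p \<in> Q \<Longrightarrow> (\<lambda>d. snd (snd (snd d))) ` D \<subseteq> Q \<Longrightarrow> q \<in> Q"
  by (induction D p r q rule: chain.induct) force+

lemma outp_bound: "chain D p r q \<Longrightarrow> \<forall>d\<in>D. length (fst (snd (snd d))) \<le> K \<Longrightarrow> length (outp r) \<le> K * length r"
  by (induction D p r q rule: chain.induct) fastforce+

definition Pset :: "(nat \<times> 'a list \<times> 'b list \<times> nat) set \<Rightarrow> 'a list set" where
  "Pset D = insert [] {u2. \<exists>d\<in>D. \<exists>r. fst (snd d) = u2 @ r}"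

lemma finite_Pset: "finite D \<Longrightarrow> finite (Pset D)"
proof -
  assume f: "finite D"
  have "Pset D \<subseteq> insert [] (\<Union>d\<in>D. (\<lambda>n. take n (fst (snd d))) ` {..length (fst (snd d))})"
  proof
    fix z assume "z \<in> Pset D"
    then consider "z = []" | d r where "d \<in> D" "fst (snd d) = z @ r" unfolding Pset_def by blast
    then show "z \<in> insert [] (\<Union>d\<in>D. (\<lambda>n. take n (fst (snd d))) ` {..length (fst (snd d))})"
    proof cases
      case 1 then show ?thesis by simp
    next
      case 2
      then have "z = take (length z) (fst (snd d))" "length z \<le> length (fst (snd d))" by auto
      then show ?thesis using 2(1) by blast
    qed
  qed
  moreover have "finite (insert [] (\<Union>d\<in>D. (\<lambda>n. take n (fst (snd d))) ` {..length (fst (snd d))}))"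
    using f by auto
  ultimately show ?thesis by (rule finite_subset)
qed

lemma split_chain: "chain D p r q \<Longrightarrow> inp r = u @ w \<Longrightarrow>
  \<exists>k u2. k \<le> length r \<and> inp (take k r) @ u2 = u \<and> inp (drop k r) = u2 @ w \<and> u2 \<in> Pset D"
proof (induction D p r q arbitrary: u rule: chain.induct)
  case (1 D p q)
  then show ?case by (auto simp: Pset_def)
next
  case (2 D p a x y b r q)
  from 2(3) have e: "x @ inp r = u @ w" by simp
  then obtain us where "(x = u @ us \<and> us @ inp r = w) \<or> (x @ us = u \<and> inp r = us @ w)"
    by (auto simp: append_eq_append_conv2)
  then show ?case
  proof
    assume h: "x = u @ us \<and> us @ inp r = w"
    have "(a,x,y,b) \<in> D" using 2(2) by auto
    then have "u \<in> Pset D" using h unfolding Pset_def by (intro insertI2 CollectI bexI[of _ "(a,x,y,b)"]) auto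
    then show ?thesis using h by (intro exI[of _ 0] exI[of _ u]) auto
  next
    assume h: "x @ us = u \<and> inp r = us @ w"
    then obtain k u2 where "k \<le> length r" "inp (take k r) @ u2 = us" "inp (drop k r) = u2 @ w" "u2 \<in> Pset D"
      using 2 by auto
    then show ?thesis using h by (intro exI[of _ "Suc k"] exI[of _ u2]) auto
  qed
qed


lemma lcp_prefix: "\<exists>r. xs = lcp xs ys @ r"
  by (induction xs ys rule: lcp.induct) auto

lemma lcp_prefix2: "\<exists>r. ys = lcp xs ys @ r"
  by (induction xs ys rule: lcp.induct) auto

lemma lcp_max: "xs = z @ r1 \<Longrightarrow> ys = z @ r2 \<Longrightarrow> length z \<le> length (lcp xs ys)"
  by (induction xs ys arbitrary: z rule: lcp.induct) (auto simp: Cons_eq_append_conv)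

lemma lcsuf_suffix1: "\<exists>r. x = r @ lcsuf x y"
proof -
  obtain r where "rev x = lcp (rev x) (rev y) @ r" using lcp_prefix by blast
  then have "x = rev r @ lcsuf x y" unfolding lcsuf_def by (metis rev_append rev_rev_ident)
  then show ?thesis by blast
qed

lemma lcsuf_suffix2: "\<exists>r. y = r @ lcsuf x y"
proof -
  obtain r where "rev y = lcp (rev x) (rev y) @ r" using lcp_prefix2 by blast
  then have "y = rev r @ lcsuf x y" unfolding lcsuf_def by (metis rev_append rev_rev_ident)
  then show ?thesis by blast
qed

lemma lcsuf_max: "x = r1 @ z \<Longrightarrow> y = r2 @ z \<Longrightarrow> length z \<le> length (lcsuf x y)"
  unfolding lcsuf_def using lcp_max[of "rev x" "rev z" "rev r1" "rev y" "rev r2"] by simp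

lemma lcsuf_len: "length (lcsuf x y) \<le> length x" "length (lcsuf x y) \<le> length y"
  using lcsuf_suffix1[of x y] lcsuf_suffix2[of y x] apply (metis le_add2 length_append)
  using lcsuf_suffix2[of y x] by (metis le_add2 length_append)

lemma wdist_self: "wdist x x = 0"
proof -
  have "length x \<le> length (lcsuf x x)" by (rule lcsuf_max[of x "[]" x x "[]"]) auto
  then show ?thesis unfolding wdist_def by simp
qed

lemma wdist_app: "wdist (a @ x) (b @ y) \<le> length a + length b + wdist x y"
proof -
  obtain r1 where r1: "x = r1 @ lcsuf x y" using lcsuf_suffix1 by blast
  obtain r2 where r2: "y = r2 @ lcsuf x y" using lcsuf_suffix2 by blast
  have "length (lcsuf x y) \<le> length (lcsuf (a @ x) (b @ y))"
    by (rule lcsuf_max[of _ "a @ r1" _ _ "b @ r2"]) (metis append.assoc r1, metis append.assoc r2)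
  moreover have "length (lcsuf x y) \<le> length x" "length (lcsuf x y) \<le> length y" by (rule lcsuf_len)+
  moreover have "length (lcsuf (a@x) (b@y)) \<le> length (a@x)" "length (lcsuf (a@x) (b@y)) \<le> length (b@y)" by (rule lcsuf_len)+
  ultimately show ?thesis unfolding wdist_def by simp
qed

definition sfx :: "nat \<Rightarrow> 'a list \<Rightarrow> 'a list" where "sfx m x = drop (length x - m) x"

lemma sfx_app: "m \<le> length b \<Longrightarrow> sfx m (a @ b) = sfx m b"
  unfolding sfx_def by (simp add: Nat.diff_add_assoc2)

lemma wdist_unapp: "wdist x y \<le> wdist (a @ x) (b @ y) + length a + length b"
proof -
  let ?Z = "lcsuf (a @ x) (b @ y)"
  obtain R1 where R1: "a @ x = R1 @ ?Z" using lcsuf_suffix1 by blast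
  obtain R2 where R2: "b @ y = R2 @ ?Z" using lcsuf_suffix2 by blast
  define m where "m = min (length ?Z) (min (length x) (length y))"
  have "sfx m x = sfx m (a @ x)" using sfx_app[of m x a] by (simp add: m_def)
  also have "\<dots> = sfx m ?Z" using R1 sfx_app[of m ?Z R1] by (simp add: m_def)
  finally have ex: "sfx m x = sfx m ?Z" .
  have "sfx m y = sfx m (b @ y)" using sfx_app[of m y b] by (simp add: m_def)
  also have "\<dots> = sfx m ?Z" using R2 sfx_app[of m ?Z R2] by (simp add: m_def)
  finally have ey: "sfx m y = sfx m ?Z" .
  have "x = take (length x - m) x @ sfx m x" unfolding sfx_def by simp
  moreover have "y = take (length y - m) y @ sfx m x" using ey ex unfolding sfx_def
    by (metis append_take_drop_id)
  ultimately have "length (sfx m x) \<le> length (lcsuf x y)" by (rule lcsuf_max)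
  moreover have "length (sfx m x) = m" unfolding sfx_def m_def by simp
  moreover have "length ?Z \<le> length (a@x)" "length ?Z \<le> length (b@y)" by (rule lcsuf_len)+
  moreover have "length (lcsuf x y) \<le> length x" "length (lcsuf x y) \<le> length y" by (rule lcsuf_len)+
  ultimately show ?thesis unfolding wdist_def m_def by simp
qed


lemma min_chain:
  assumes gr: "{(x,y). t x = Some y} = {(x,y). \<exists>p\<in>I. \<exists>q\<in>F. path D p x y q}"
    and tz: "t z \<noteq> None"
  shows "\<exists>p r. p\<in>I \<and> chain D p r (tgt p r) \<and> tgt p r \<in> F \<and> inp r = z \<and> t z = Some (outp r) \<and>
     (\<forall>i j. i < j \<longrightarrow> j \<le> length r \<longrightarrow> tgt p (take i r) = tgt p (take j r) \<longrightarrow>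
        length (inp (take i r)) \<noteq> length (inp (take j r)))"
proof -
  note acc = acc_iff[OF gr]
  define A where "A n = (\<exists>p r. p\<in>I \<and> chain D p r (tgt p r) \<and> tgt p r \<in> F \<and> inp r = z \<and> length r = n)" for n
  obtain y where "t z = Some y" using tz by auto
  then obtain p0 r0 where "p0\<in>I \<and> chain D p0 r0 (tgt p0 r0) \<and> tgt p0 r0 \<in> F \<and> inp r0 = z"
    using acc by blast
  then have "A (length r0)" unfolding A_def by blast
  then have "A (LEAST n. A n)" by (rule LeastI)
  then obtain p r where pr: "p\<in>I" "chain D p r (tgt p r)" "tgt p r \<in> F" "inp r = z" "length r = (LEAST n. A n)"
    unfolding A_def by blast
  have out: "t z = Some (outp r)" using acc pr by blast
  have "\<forall>i j. i < j \<longrightarrow> j \<le> length r \<longrightarrow> tgt p (take i r) = tgt p (take j r) \<longrightarrow>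
        length (inp (take i r)) \<noteq> length (inp (take j r))"
  proof (intro allI impI notI)
    fix i j assume ij: "i < j" "j \<le> length r" and st: "tgt p (take i r) = tgt p (take j r)"
      and ln: "length (inp (take i r)) = length (inp (take j r))"
    define r1 where "r1 = take i r"
    define s where "s = take (j - i) (drop i r)"
    define r2 where "r2 = drop j r"
    have tj: "take j r = r1 @ s" unfolding r1_def s_def using take_add[of i "j - i" r] ij by simp
    have rdec: "r = r1 @ s @ r2" using tj unfolding r2_def by (metis append.assoc append_take_drop_id)
    have lens: "length s = j - i" unfolding s_def using ij by simp
    have "inp s = []" using ln tj unfolding r1_def by simp
    define q0 where "q0 = tgt p r1"
    have sq: "tgt q0 s = q0" using st tj unfolding q0_def r1_def by simp
    have c1: "chain D p r1 q0" and c2: "chain D q0 s q0" and c3: "chain D q0 r2 (tgt p r)"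
      using pr(2) unfolding rdec q0_def by (auto simp: chain_append sq[unfolded q0_def])
    show False
    proof (cases "outp s = []")
      case True
      have "chain D p (r1 @ r2) (tgt p (r1 @ r2))" and "tgt p (r1 @ r2) = tgt p r"
        using c1 c3 chain_tgt[OF c1] chain_tgt[OF c3] by (auto simp: chain_append)
      then have "A (length (r1 @ r2))" unfolding A_def using pr `inp s = []` rdec
        by (intro exI[of _ p] exI[of _ "r1 @ r2"]) auto
      then have "(LEAST n. A n) \<le> length (r1 @ r2)" by (rule Least_le)
      then show False using pr(5) rdec lens ij by simp
    next
      case False
      have "chain D p (r1 @ s @ s @ r2) (tgt p r)"
        using c1 c2 c3 chain_tgt[OF c1] chain_tgt[OF c2] by (auto simp: chain_append)
      moreover have "tgt p (r1 @ s @ s @ r2) = tgt p r"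
        using calculation chain_tgt by blast
      ultimately have "t z = Some (outp (r1 @ s @ s @ r2))" using acc pr `inp s = []` rdec
        by (metis append.left_neutral inp_append)
      then have "outp (r1 @ s @ s @ r2) = outp r" using out by simp
      moreover have "length (outp (r1 @ s @ s @ r2)) = length (outp r) + length (outp s)"
        by (simp add: rdec)
      ultimately show False using False by simp
    qed
  qed
  then show ?thesis using pr out by blast
qed


lemma pigeon:
  assumes Q: "p \<in> Q" "finite Q" "(\<lambda>d. snd (snd (snd d))) ` D \<subseteq> Q"
    and ch: "chain D p r q"
    and nc: "\<forall>i j. i < j \<longrightarrow> j \<le> length r \<longrightarrow> tgt p (take i r) = tgt p (take j r) \<longrightarrow>
        length (inp (take i r)) \<noteq> length (inp (take j r))"
    and k: "k \<le> length r"
  shows "k + 1 \<le> card Q * (length (inp (take k r)) + 1)"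
proof -
  define f where "f i = (tgt p (take i r), length (inp (take i r)))" for i
  have inj: "inj_on f {0..k}"
  proof (rule inj_onI)
    fix i j assume "i \<in> {0..k}" "j \<in> {0..k}" "f i = f j"
    then have h: "i \<le> k" "j \<le> k" "tgt p (take i r) = tgt p (take j r)"
      "length (inp (take i r)) = length (inp (take j r))" unfolding f_def by auto
    show "i = j"
    proof (rule ccontr)
      assume "i \<noteq> j"
      then consider "i < j" | "j < i" by linarith
      then show False
      proof cases
        case 1 then show False using nc h k by force
      next
        case 2 then show False using nc h k by force
      qed
    qed
  qed
  have sub: "f ` {0..k} \<subseteq> Q \<times> {0..length (inp (take k r))}"
  proof
    fix z assume "z \<in> f ` {0..k}"
    then obtain i where i: "i \<le> k" "z = f i" by auto
    have "chain D p (take i r @ drop i r) q" using ch by simp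
    then have "chain D p (take i r) (tgt p (take i r))" by (simp only: chain_append)
    then have "tgt p (take i r) \<in> Q" using chain_in_Q Q by blast
    moreover have "take k r = take i r @ take (k - i) (drop i r)"
      using take_add[of i "k - i" r] i by simp
    then have "length (inp (take i r)) \<le> length (inp (take k r))"
      by (metis inp_append length_append le_add1)
    ultimately show "z \<in> Q \<times> {0..length (inp (take k r))}" using i unfolding f_def by auto
  qed
  have "card {0..k} \<le> card (Q \<times> {0..length (inp (take k r))})"
    by (rule card_inj_on_le[OF inj sub]) (use Q in auto)
  then show ?thesis by (simp add: card_cartesian_product)
qed


lemma side:
  assumes gr: "{(x,y). t x = Some y} = {(x,y). \<exists>p\<in>I. \<exists>q\<in>F. path D p x y q}"
    and tz: "t (u @ w) \<noteq> None"
    and Qd: "Q = I \<union> (\<lambda>d. snd (snd (snd d))) ` D" and fQ: "finite Q"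
    and Kd: "\<forall>d\<in>D. length (fst (snd (snd d))) \<le> K"
  shows "\<exists>p r k u2. p\<in>I \<and> tgt p r \<in> F \<and> k \<le> length r \<and> inp (take k r) @ u2 = u \<and>
     inp (drop k r) = u2 @ w \<and> u2 \<in> Pset D \<and> t (u @ w) = Some (outp (take k r) @ outp (drop k r)) \<and>
     length (outp (take k r)) \<le> K * card Q * (length u + 1) \<and>
     chain D p (take k r) (tgt p (take k r)) \<and> chain D (tgt p (take k r)) (drop k r) (tgt p r) \<and>
     tgt p (take k r) \<in> Q"
proof -
  obtain p r where pr: "p\<in>I" "chain D p r (tgt p r)" "tgt p r \<in> F" "inp r = u @ w" "t (u @ w) = Some (outp r)"
    and nc: "\<forall>i j. i < j \<longrightarrow> j \<le> length r \<longrightarrow> tgt p (take i r) = tgt p (take j r) \<longrightarrow>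
        length (inp (take i r)) \<noteq> length (inp (take j r))"
    using min_chain[OF gr tz] by blast
  obtain k u2 where k: "k \<le> length r" "inp (take k r) @ u2 = u" "inp (drop k r) = u2 @ w" "u2 \<in> Pset D"
    using split_chain[OF pr(2) pr(4)] by blast
  have cc: "chain D p (take k r @ drop k r) (tgt p r)" using pr(2) by simp
  then have c1: "chain D p (take k r) (tgt p (take k r))" and c2: "chain D (tgt p (take k r)) (drop k r) (tgt p r)"
    by (simp_all only: chain_append)
  have pQ: "p \<in> Q" using pr(1) Qd by auto
  have tQ: "(\<lambda>d. snd (snd (snd d))) ` D \<subseteq> Q" using Qd by auto
  have "k + 1 \<le> card Q * (length (inp (take k r)) + 1)"
    by (rule pigeon[OF pQ fQ tQ pr(2) nc k(1)])
  also have "\<dots> \<le> card Q * (length u + 1)" using k(2)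
    by (metis add_le_mono1 le_add1 length_append mult_le_mono2)
  finally have kb: "k \<le> card Q * (length u + 1)" by simp
  have "length (outp (take k r)) \<le> K * length (take k r)" by (rule outp_bound[OF c1 Kd])
  also have "\<dots> \<le> K * k" by simp
  also have "\<dots> \<le> K * (card Q * (length u + 1))" using kb by (rule mult_le_mono2)
  finally have ob: "length (outp (take k r)) \<le> K * card Q * (length u + 1)" by (simp only: mult.assoc)
  have "t (u @ w) = Some (outp (take k r) @ outp (drop k r))"
    using pr(5) by (metis append_take_drop_id outp_append)
  moreover have "tgt p (take k r) \<in> Q" using chain_in_Q[OF c1 pQ tQ] .
  ultimately show ?thesis using pr k ob c1 c2 by blast
qed


theorem lemma20:
  fixes t :: "'a list \<Rightarrow> 'b list option"
  assumes "rational_function t"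
    and "suffix_closed {x. t x \<noteq> None}"
  shows "\<exists>c::nat. \<forall>u v w. t (u @ w) \<noteq> None \<longrightarrow> t (v @ w) \<noteq> None \<longrightarrow> R_rel t u v \<longrightarrow>
            wdist (the (t (u @ w))) (the (t (v @ w))) \<le> c * (length u + length v)"
proof -
  obtain I F and D :: "(nat \<times> 'a list \<times> 'b list \<times> nat) set" where fin: "finite I" "finite D"
    and gr: "{(x,y). t x = Some y} = {(x,y). \<exists>p\<in>I. \<exists>q\<in>F. path D p x y q}"
    using assms(1) unfolding rational_function_def rational_relation_def by blast
  note acc = acc_iff[OF gr]
  define Q where "Q = I \<union> (\<lambda>d. snd (snd (snd d))) ` D"
  have fQ: "finite Q" unfolding Q_def using fin by auto
  define K where "K = Max (insert 0 ((\<lambda>d. length (fst (snd (snd d)))) ` D))"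
  have Kd: "\<forall>d\<in>D. length (fst (snd (snd d))) \<le> K" unfolding K_def using fin by auto
  define N where "N = card Q"
  define Cfg where "Cfg = Q \<times> Pset D"
  have fC: "finite Cfg" unfolding Cfg_def using fQ finite_Pset[OF fin(2)] by auto
  define S where "S c1 c2 = {n. \<exists>w' \<sigma>1 \<sigma>2. chain D (fst c1) \<sigma>1 (tgt (fst c1) \<sigma>1) \<and> tgt (fst c1) \<sigma>1 \<in> F \<and>
      inp \<sigma>1 = snd c1 @ w' \<and> chain D (fst c2) \<sigma>2 (tgt (fst c2) \<sigma>2) \<and> tgt (fst c2) \<sigma>2 \<in> F \<and>
      inp \<sigma>2 = snd c2 @ w' \<and> n = wdist (outp \<sigma>1) (outp \<sigma>2)}" for c1 c2
  define G where "G = {c \<in> Cfg \<times> Cfg. finite (S (fst c) (snd c))}"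
  define M where "M = Max (insert 0 (\<Union>c\<in>G. S (fst c) (snd c)))"
  have fU: "finite (\<Union>c\<in>G. S (fst c) (snd c))"
    using fC unfolding G_def by (auto intro: finite_subset[of _ "Cfg \<times> Cfg"])
  have main: "wdist (the (t (u @ w))) (the (t (v @ w))) \<le> K * N * (length u + 1) + K * N * (length v + 1) + M"
    if tu: "t (u @ w) \<noteq> None" and tv: "t (v @ w) \<noteq> None" and R: "R_rel t u v" for u v w
  proof -
    obtain p r k u2 where A: "p\<in>I" "tgt p r \<in> F" "k \<le> length r" "inp (take k r) @ u2 = u"
      "inp (drop k r) = u2 @ w" "u2 \<in> Pset D" "t (u @ w) = Some (outp (take k r) @ outp (drop k r))"
      "length (outp (take k r)) \<le> K * card Q * (length u + 1)"
      "chain D p (take k r) (tgt p (take k r))" "chain D (tgt p (take k r)) (drop k r) (tgt p r)"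
      "tgt p (take k r) \<in> Q"
      using side[OF gr tu Q_def fQ Kd] by blast
    obtain p' r' k' v2 where B: "p'\<in>I" "tgt p' r' \<in> F" "k' \<le> length r'" "inp (take k' r') @ v2 = v"
      "inp (drop k' r') = v2 @ w" "v2 \<in> Pset D" "t (v @ w) = Some (outp (take k' r') @ outp (drop k' r'))"
      "length (outp (take k' r')) \<le> K * card Q * (length v + 1)"
      "chain D p' (take k' r') (tgt p' (take k' r'))" "chain D (tgt p' (take k' r')) (drop k' r') (tgt p' r')"
      "tgt p' (take k' r') \<in> Q"
      using side[OF gr tv Q_def fQ Kd] by blast
    define \<alpha> where "\<alpha> = outp (take k r)"
    define \<beta> where "\<beta> = outp (take k' r')"
    define s where "s = tgt p (take k r)"
    define s' where "s' = tgt p' (take k' r')"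
    define Rs where "Rs = {wdist (the (t (u @ w))) (the (t (v @ w))) | w. t (u @ w) \<noteq> None \<and> t (v @ w) \<noteq> None}"
    have fR: "finite Rs" using R unfolding R_rel_def Rs_def by blast
    define Bd where "Bd = Max (insert 0 Rs)"
    have finS: "finite (S (s,u2) (s',v2))"
    proof (rule finite_subset[of _ "{..Bd + length \<alpha> + length \<beta>}"])
      show "S (s,u2) (s',v2) \<subseteq> {..Bd + length \<alpha> + length \<beta>}"
      proof
        fix n assume "n \<in> S (s,u2) (s',v2)"
        then obtain w' \<sigma>1 \<sigma>2 where h: "chain D s \<sigma>1 (tgt s \<sigma>1)" "tgt s \<sigma>1 \<in> F"
          "inp \<sigma>1 = u2 @ w'" "chain D s' \<sigma>2 (tgt s' \<sigma>2)" "tgt s' \<sigma>2 \<in> F"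
          "inp \<sigma>2 = v2 @ w'" "n = wdist (outp \<sigma>1) (outp \<sigma>2)"
          unfolding S_def by auto
        have c1: "chain D p (take k r @ \<sigma>1) (tgt p (take k r @ \<sigma>1))"
          using A(9) h(1) unfolding s_def by (simp add: chain_append)
        have "tgt p (take k r @ \<sigma>1) \<in> F" using h(2) unfolding s_def by simp
        moreover have "inp (take k r @ \<sigma>1) = u @ w'" using A(4) h(3) by simp
        ultimately have t1: "t (u @ w') = Some (\<alpha> @ outp \<sigma>1)" using acc A(1) c1 unfolding \<alpha>_def
          by (metis outp_append)
        have c2: "chain D p' (take k' r' @ \<sigma>2) (tgt p' (take k' r' @ \<sigma>2))"
          using B(9) h(4) unfolding s'_def by (simp add: chain_append)
        have "tgt p' (take k' r' @ \<sigma>2) \<in> F" using h(5) unfolding s'_def by simp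
        moreover have "inp (take k' r' @ \<sigma>2) = v @ w'" using B(4) h(6) by simp
        ultimately have t2: "t (v @ w') = Some (\<beta> @ outp \<sigma>2)" using acc B(1) c2 unfolding \<beta>_def
          by (metis outp_append)
        have "wdist (\<alpha> @ outp \<sigma>1) (\<beta> @ outp \<sigma>2) \<in> Rs" unfolding Rs_def using t1 t2 by force
        then have "wdist (\<alpha> @ outp \<sigma>1) (\<beta> @ outp \<sigma>2) \<le> Bd" unfolding Bd_def using fR by simp
        then have "n \<le> Bd + length \<alpha> + length \<beta>" using h(7) wdist_unapp[of "outp \<sigma>1" "outp \<sigma>2" \<alpha> \<beta>] by linarith
        then show "n \<in> {..Bd + length \<alpha> + length \<beta>}" by simp
      qed
    qed simp
    have "wdist (outp (drop k r)) (outp (drop k' r')) \<in> S (s,u2) (s',v2)"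
      unfolding S_def s_def s'_def fst_conv snd_conv mem_Collect_eq
      apply (rule exI[of _ w], rule exI[of _ "drop k r"], rule exI[of _ "drop k' r'"])
      using A(2,5,10) B(2,5,10) chain_tgt[OF A(10)] chain_tgt[OF B(10)] by simp
    moreover have "((s,u2),(s',v2)) \<in> G" unfolding G_def Cfg_def s_def s'_def using A(6,11) B(6,11) finS
      by (simp add: s_def s'_def)
    ultimately have "wdist (outp (drop k r)) (outp (drop k' r')) \<in> (\<Union>c\<in>G. S (fst c) (snd c))" by force
    then have wM: "wdist (outp (drop k r)) (outp (drop k' r')) \<le> M" unfolding M_def using fU by simp
    have "wdist (the (t (u @ w))) (the (t (v @ w))) = wdist (\<alpha> @ outp (drop k r)) (\<beta> @ outp (drop k' r'))"
      using A(7) B(7) unfolding \<alpha>_def \<beta>_def by simp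
    also have "\<dots> \<le> length \<alpha> + length \<beta> + wdist (outp (drop k r)) (outp (drop k' r'))" by (rule wdist_app)
    finally show ?thesis using wM A(8) B(8) unfolding \<alpha>_def \<beta>_def N_def by linarith
  qed
  show ?thesis
  proof (intro exI[of _ "3 * K * N + M"] allI impI)
    fix u v w :: "'a list"
    assume tu: "t (u @ w) \<noteq> None" and tv: "t (v @ w) \<noteq> None" and R: "R_rel t u v"
    show "wdist (the (t (u @ w))) (the (t (v @ w))) \<le> (3 * K * N + M) * (length u + length v)"
    proof (cases "u = [] \<and> v = []")
      case True
      then show ?thesis by (simp add: wdist_self)
    next
      case False
      then have ab: "1 \<le> length u + length v" by (cases u; cases v) auto
      define P where "P = K * N"
      have "wdist (the (t (u @ w))) (the (t (v @ w))) \<le> P * (length u + 1) + P * (length v + 1) + M"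
        using main[OF tu tv R] unfolding P_def .
      also have "\<dots> = P * (length u + length v) + (2 * P + M) * 1" by (simp add: algebra_simps)
      also have "\<dots> \<le> P * (length u + length v) + (2 * P + M) * (length u + length v)"
        using ab by (intro add_left_mono mult_le_mono2)
      also have "\<dots> = (3 * K * N + M) * (length u + length v)" unfolding P_def by (simp add: algebra_simps)
      finally show ?thesis .
    qed
  qed
qed

end
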